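(* Let $p$ be a prime. Let $A$ be the classical divided power algebra over $\mathbb Z_{(p)}$ in a variable $y$, regarded as an ungraded ring. Let $\mathbf D$ be the classical divided power algebra over $A$ in a variable $x$, graded by the $x$-degree; equivalently, $\mathbf D$ is the classical divided power algebra over $\mathbb Z_{(p)}$ in two variables $x,y$. Then: - The ideal of $\mathbf D$ generated by $y^{[1]}$ and $x^{[1]}$ is not finitely presented. - $\mathbf D$ is neither graded-coherent (for the $x$-grading) nor coherent. - $\mathbf D$ is not graded-coherent with respect to its bigrading by $(x\text{-degree},y\text{-degree})$.
   Context: The classical divided power algebra over a commutative ring $R$ in a variable $z$ is the $R$-algebra that is free as an $R$-module on basis $z^{[i]}$ ($i\ge0$), with $z^{[n]}z^{[m]}=\binom{n+m}{n}z^{[n+m]}$. In two variables it is the tensor product over $R$ of the one-variable algebras, with basis $x^{[i]}y^{[j]}$. A (graded) ring is (graded-)coherent if every finitely generated (homogeneous) ideal is finitely presented. *)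

theory Defs
  imports Complex_Main "HOL-Computational_Algebra.Primes" "HOL-Algebra.Ideal" "HOL-Library.FuncSet"
begin

definition Zloc :: "nat \<Rightarrow> rat set" where
  "Zloc p = {q. coprime (int p) (snd (quotient_of q))}"

text \<open>An element is a finitely supported family of coefficients in Z_(p),
  indexed by (i,j), standing for sum of c(i,j) x^[i] y^[j].
  Multiplication: x^[a]y^[b] * x^[c]y^[d] = C(a+c,a) C(b+d,b) x^[a+c]y^[b+d].\<close>

definition DP2 :: "nat \<Rightarrow> (nat \<times> nat \<Rightarrow> rat) ring" where
  "DP2 p = \<lparr> carrier = {f. finite {k. f k \<noteq> 0} \<and> (\<forall>k. f k \<in> Zloc p)},
             mult = (\<lambda>f g. \<lambda>(n, m). \<Sum>i\<le>n. \<Sum>j\<le>m.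
                        of_nat (n choose i) * of_nat (m choose j) * f (i, j) * g (n - i, m - j)),
             one = (\<lambda>k. if k = (0, 0) then 1 else 0),
             zero = (\<lambda>k. 0),
             add = (\<lambda>f g k. f k + g k) \<rparr>"

definition dpmon :: "nat \<Rightarrow> nat \<Rightarrow> (nat \<times> nat \<Rightarrow> rat)" where
  "dpmon i j = (\<lambda>k. if k = (i, j) then 1 else 0)"

definition lin_comb :: "('a, 'b) ring_scheme \<Rightarrow> nat \<Rightarrow> (nat \<Rightarrow> 'a) \<Rightarrow> (nat \<Rightarrow> 'a) \<Rightarrow> 'a" where
  "lin_comb R n r g = finsum R (\<lambda>i. r i \<otimes>\<^bsub>R\<^esub> g i) {..<n}"

definition syzygies :: "('a, 'b) ring_scheme \<Rightarrow> nat \<Rightarrow> (nat \<Rightarrow> 'a) \<Rightarrow> (nat \<Rightarrow> 'a) set" where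
  "syzygies R n g = {r. r \<in> {..<n} \<rightarrow> carrier R \<and> lin_comb R n r g = \<zero>\<^bsub>R\<^esub>}"

definition finitely_generated_ideal :: "('a, 'b) ring_scheme \<Rightarrow> 'a set \<Rightarrow> bool" where
  "finitely_generated_ideal R I \<longleftrightarrow>
     (\<exists>S. finite S \<and> S \<subseteq> carrier R \<and> I = genideal R S)"

definition finitely_presented_ideal :: "('a, 'b) ring_scheme \<Rightarrow> 'a set \<Rightarrow> bool" where
  "finitely_presented_ideal R I \<longleftrightarrow>
     (\<exists>n g. g \<in> {..<n} \<rightarrow> carrier R \<and> I = genideal R (g ` {..<n}) \<and>
        (\<exists>(m::nat) s. (\<forall>k<m. s k \<in> syzygies R n g) \<and>
           (\<forall>r\<in>syzygies R n g. \<exists>c. c \<in> {..<m} \<rightarrow> carrier R \<and>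
               (\<forall>i<n. r i = finsum R (\<lambda>k. c k \<otimes>\<^bsub>R\<^esub> s k i) {..<m}))))"

definition coherent :: "('a, 'b) ring_scheme \<Rightarrow> bool" where
  "coherent R \<longleftrightarrow>
     (\<forall>I. ideal I R \<and> finitely_generated_ideal R I \<longrightarrow> finitely_presented_ideal R I)"

definition graded_coherent :: "('a, 'b) ring_scheme \<Rightarrow> ('a set \<Rightarrow> bool) \<Rightarrow> bool" where
  "graded_coherent R homogeneous \<longleftrightarrow>
     (\<forall>I. ideal I R \<and> homogeneous I \<and> finitely_generated_ideal R I
          \<longrightarrow> finitely_presented_ideal R I)"

definition x_homogeneous :: "(nat \<times> nat \<Rightarrow> rat) set \<Rightarrow> bool" where
  "x_homogeneous I \<longleftrightarrow>
     (\<forall>f\<in>I. \<forall>d. (\<lambda>(i, j). if i = d then f (i, j) else 0) \<in> I)"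

definition bi_homogeneous :: "(nat \<times> nat \<Rightarrow> rat) set \<Rightarrow> bool" where
  "bi_homogeneous I \<longleftrightarrow>
     (\<forall>f\<in>I. \<forall>d e. (\<lambda>k. if k = (d, e) then f k else 0) \<in> I)"

end

theory Submission
  imports Defs "HOL-Computational_Algebra.Formal_Power_Series"
begin

lemma Zloc_iff: "q \<in> Zloc p \<longleftrightarrow> (\<exists>a b. b > 0 \<and> coprime (int p) b \<and> q = of_int a / of_int b)"
proof
  assume "q \<in> Zloc p"
  obtain n d where nd: "quotient_of q = (n,d)" by fastforce
  then show "\<exists>a b. b > 0 \<and> coprime (int p) b \<and> q = of_int a / of_int b"
    using \<open>q \<in> Zloc p\<close> quotient_of_div[OF nd] quotient_of_denom_pos[OF nd] unfolding Zloc_def by auto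
next
  assume "\<exists>a b. b > 0 \<and> coprime (int p) b \<and> q = of_int a / of_int b"
  then obtain a b where ab: "b > 0" "coprime (int p) b" "q = of_int a / of_int b" by blast
  obtain n d where nd: "quotient_of q = (n,d)" by fastforce
  have d: "d > 0" "coprime n d" "q = of_int n / of_int d"
    using quotient_of_div[OF nd] quotient_of_denom_pos[OF nd] quotient_of_coprime[OF nd] by auto
  have "of_int n * of_int b = (of_int a * of_int d :: rat)"
    using ab d by (simp add: field_simps)
  hence e: "n * b = a * d" by (metis of_int_eq_iff of_int_mult)
  have "d dvd n * b" using e by simp
  hence "d dvd b" using d(2) by (metis coprime_commute coprime_dvd_mult_right_iff)
  hence "coprime (int p) d" using ab(2) coprime_imp_coprime by (metis coprime_divisors dvd_refl)
  thus "q \<in> Zloc p" using nd unfolding Zloc_def by simp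
qed

lemma Zloc_add: "a \<in> Zloc p \<Longrightarrow> b \<in> Zloc p \<Longrightarrow> a + b \<in> Zloc p"
proof -
  assume "a \<in> Zloc p" "b \<in> Zloc p"
  then obtain x y u v where xy: "y > 0" "coprime (int p) y" "a = of_int x / of_int y"
    and uv: "v > 0" "coprime (int p) v" "b = of_int u / of_int v" unfolding Zloc_iff by blast
  have "a + b = of_int (x*v + u*y) / of_int (y*v)" using xy uv by (simp add: field_simps)
  moreover have "y * v > 0" "coprime (int p) (y*v)" using xy uv by auto
  ultimately show ?thesis unfolding Zloc_iff by blast
qed

lemma Zloc_mult: "a \<in> Zloc p \<Longrightarrow> b \<in> Zloc p \<Longrightarrow> a * b \<in> Zloc p"
proof -
  assume "a \<in> Zloc p" "b \<in> Zloc p"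
  then obtain x y u v where xy: "y > 0" "coprime (int p) y" "a = of_int x / of_int y"
    and uv: "v > 0" "coprime (int p) v" "b = of_int u / of_int v" unfolding Zloc_iff by blast
  have "a * b = of_int (x*u) / of_int (y*v)" using xy uv by simp
  moreover have "y * v > 0" "coprime (int p) (y*v)" using xy uv by auto
  ultimately show ?thesis unfolding Zloc_iff by blast
qed

lemma Zloc_int: "of_int a \<in> Zloc p"
  unfolding Zloc_iff by (rule exI[of _ a], rule exI[of _ 1]) auto

lemma Zloc_nat: "of_nat a \<in> Zloc p"
  using Zloc_int[of "int a" p] by simp

lemma Zloc_0: "0 \<in> Zloc p" and Zloc_1: "1 \<in> Zloc p"
  using Zloc_int[of 0 p] Zloc_int[of 1 p] by auto

lemma Zloc_uminus: "a \<in> Zloc p \<Longrightarrow> - a \<in> Zloc p"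
  using Zloc_mult[OF Zloc_int[of "-1"]] by fastforce

lemma Zloc_diff: "a \<in> Zloc p \<Longrightarrow> b \<in> Zloc p \<Longrightarrow> a - b \<in> Zloc p"
  using Zloc_add Zloc_uminus by fastforce

lemma Zloc_sum: "(\<And>i. i \<in> A \<Longrightarrow> f i \<in> Zloc p) \<Longrightarrow> sum f A \<in> Zloc p"
  by (induction A rule: infinite_finite_induct) (auto intro: Zloc_add Zloc_0)

abbreviation "car p \<equiv> carrier (DP2 p)"

lemma DP2_carrier: "carrier (DP2 p) = {f. finite {k. f k \<noteq> 0} \<and> (\<forall>k. f k \<in> Zloc p)}"
  and DP2_mult: "(f \<otimes>\<^bsub>DP2 p\<^esub> g) (n, m) = (\<Sum>i\<le>n. \<Sum>j\<le>m.
                        of_nat (n choose i) * of_nat (m choose j) * f (i, j) * g (n - i, m - j))"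
  and DP2_one: "\<one>\<^bsub>DP2 p\<^esub> = (\<lambda>k. if k = (0, 0) then 1 else 0)"
  and DP2_zero: "\<zero>\<^bsub>DP2 p\<^esub> = (\<lambda>k. 0)"
  and DP2_add: "f \<oplus>\<^bsub>DP2 p\<^esub> g = (\<lambda>k. f k + g k)"
  by (auto simp: DP2_def)

definition Phi :: "(nat \<times> nat \<Rightarrow> rat) \<Rightarrow> rat fps fps" where
  "Phi f = Abs_fps (\<lambda>i. Abs_fps (\<lambda>j. f (i,j) / (fact i * fact j)))"

lemma Phi_nth[simp]: "fps_nth (fps_nth (Phi f) i) j = f (i,j) / (fact i * fact j)"
  by (simp add: Phi_def)

lemma Phi_inj: "Phi f = Phi g \<Longrightarrow> f = g"
proof (rule ext)
  fix k assume "Phi f = Phi g"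
  obtain i j :: nat where k: "k = (i,j)" by fastforce
  have "fps_nth (fps_nth (Phi f) i) j = fps_nth (fps_nth (Phi g) i) j" using \<open>Phi f = Phi g\<close> by simp
  thus "f k = g k" using k by (simp add: field_simps)
qed

lemma Phi_add: "Phi (f \<oplus>\<^bsub>DP2 p\<^esub> g) = Phi f + Phi g"
  by (intro fps_ext) (simp add: DP2_add add_divide_distrib)

lemma Phi_zero: "Phi \<zero>\<^bsub>DP2 p\<^esub> = 0"
  by (intro fps_ext) (simp add: DP2_zero)

lemma Phi_one: "Phi \<one>\<^bsub>DP2 p\<^esub> = 1"
  by (intro fps_ext) (auto simp: DP2_one)

lemma Phi_neg: "Phi (\<lambda>k. - f k) = - Phi f"
  by (intro fps_ext) simp

lemma Phi_mult: "Phi (f \<otimes>\<^bsub>DP2 p\<^esub> g) = Phi f * Phi g"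
proof (intro fps_ext)
  fix n m
  have "fps_nth (fps_nth (Phi f * Phi g) n) m = (\<Sum>i\<le>n. \<Sum>j\<le>m. fps_nth (fps_nth (Phi f) i) j * fps_nth (fps_nth (Phi g) (n-i)) (m-j))"
    by (simp add: fps_mult_nth fps_sum_nth atLeast0AtMost)
  also have "\<dots> = (\<Sum>i\<le>n. \<Sum>j\<le>m. (of_nat (n choose i) * of_nat (m choose j) * f (i, j) * g (n - i, m - j)) / (fact n * fact m))"
  proof (intro sum.cong refl)
    fix i j assume "i \<in> {..n}" "j \<in> {..m}"
    hence "i \<le> n" "j \<le> m" by auto
    show "fps_nth (fps_nth (Phi f) i) j * fps_nth (fps_nth (Phi g) (n-i)) (m-j) = (of_nat (n choose i) * of_nat (m choose j) * f (i, j) * g (n - i, m - j)) / (fact n * fact m)"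
      by (simp add: binomial_fact[OF \<open>i \<le> n\<close>] binomial_fact[OF \<open>j \<le> m\<close>] field_simps)
  qed
  also have "\<dots> = fps_nth (fps_nth (Phi (f \<otimes>\<^bsub>DP2 p\<^esub> g)) n) m"
    by (simp add: DP2_mult sum_divide_distrib)
  finally show "fps_nth (fps_nth (Phi (f \<otimes>\<^bsub>DP2 p\<^esub> g)) n) m = fps_nth (fps_nth (Phi f * Phi g) n) m" by simp
qed

lemma fin_bound: fixes f :: "nat \<times> nat \<Rightarrow> 'a::zero" shows "finite {k. f k \<noteq> 0} \<longleftrightarrow> (\<exists>N. \<forall>i j. f (i,j) \<noteq> 0 \<longrightarrow> i < N \<and> j < N)"
proof
  assume "finite {k. f k \<noteq> 0}"
  then obtain N where "\<forall>k\<in>{k. f k \<noteq> 0}. fst k < N \<and> snd k < N"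
  proof -
    let ?N = "Suc (Max (fst ` {k. f k \<noteq> 0} \<union> snd ` {k. f k \<noteq> 0}))"
    have "\<forall>k\<in>{k. f k \<noteq> 0}. fst k < ?N \<and> snd k < ?N"
      using \<open>finite {k. f k \<noteq> 0}\<close> by (auto simp: le_imp_less_Suc)
    thus ?thesis using that by blast
  qed
  thus "\<exists>N. \<forall>i j. f (i,j) \<noteq> 0 \<longrightarrow> i < N \<and> j < N" by auto
next
  assume "\<exists>N. \<forall>i j. f (i,j) \<noteq> 0 \<longrightarrow> i < N \<and> j < N"
  then obtain N where N: "\<forall>i j. f (i,j) \<noteq> 0 \<longrightarrow> i < N \<and> j < N" by blast
  have "{k. f k \<noteq> 0} \<subseteq> {..<N} \<times> {..<N}" using N by auto
  thus "finite {k. f k \<noteq> 0}" by (rule finite_subset) auto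
qed

lemma mult_closed: assumes "f \<in> car p" "g \<in> car p" shows "f \<otimes>\<^bsub>DP2 p\<^esub> g \<in> car p"
proof -
  obtain A where A: "\<forall>i j. f (i,j) \<noteq> 0 \<longrightarrow> i < A \<and> j < A" using assms fin_bound[of f] by (auto simp: DP2_carrier)
  obtain B where B: "\<forall>i j. g (i,j) \<noteq> 0 \<longrightarrow> i < B \<and> j < B" using assms fin_bound[of g] by (auto simp: DP2_carrier)
  have "\<forall>n m. (f \<otimes>\<^bsub>DP2 p\<^esub> g) (n,m) \<noteq> 0 \<longrightarrow> n < A + B \<and> m < A + B"
  proof (intro allI impI)
    fix n m assume "(f \<otimes>\<^bsub>DP2 p\<^esub> g) (n,m) \<noteq> 0"
    then obtain i j where ij: "i \<le> n" "j \<le> m" "f (i,j) \<noteq> 0" "g (n-i,m-j) \<noteq> 0"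
      unfolding DP2_mult by (metis (no_types, lifting) atMost_iff mult_not_zero sum.neutral)
    show "n < A + B \<and> m < A + B" using A B ij by (metis add_less_mono le_add_diff_inverse)
  qed
  moreover have "\<forall>k. (f \<otimes>\<^bsub>DP2 p\<^esub> g) k \<in> Zloc p"
  proof
    fix k :: "nat\<times>nat" obtain n m where k: "k = (n,m)" by fastforce
    show "(f \<otimes>\<^bsub>DP2 p\<^esub> g) k \<in> Zloc p" unfolding k DP2_mult using assms
      by (intro Zloc_sum Zloc_mult Zloc_nat) (auto simp: DP2_carrier)
  qed
  ultimately show ?thesis unfolding DP2_carrier using fin_bound by blast
qed

lemma add_closed: assumes "f \<in> car p" "g \<in> car p" shows "f \<oplus>\<^bsub>DP2 p\<^esub> g \<in> car p"
proof -
  have "{k. f k + g k \<noteq> 0} \<subseteq> {k. f k \<noteq> 0} \<union> {k. g k \<noteq> 0}" by auto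
  thus ?thesis using assms by (auto simp: DP2_carrier DP2_add intro: Zloc_add finite_subset)
qed

lemma neg_closed: assumes "f \<in> car p" shows "(\<lambda>k. - f k) \<in> car p"
  using assms by (auto simp: DP2_carrier intro: Zloc_uminus)

lemma zero_closed: "\<zero>\<^bsub>DP2 p\<^esub> \<in> car p" by (auto simp: DP2_carrier DP2_zero Zloc_0)
lemma one_closed: "\<one>\<^bsub>DP2 p\<^esub> \<in> car p"
proof -
  have "{k. (if k = (0::nat, 0::nat) then 1::rat else 0) \<noteq> 0} = {(0,0)}" by auto
  thus ?thesis by (auto simp: DP2_carrier DP2_one Zloc_0 Zloc_1)
qed

lemma cring_DP2: "cring (DP2 p)"
proof (rule cringI)
  show "abelian_group (DP2 p)"
  proof (rule abelian_groupI)
    fix x assume "x \<in> car p"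
    hence "(\<lambda>k. - x k) \<in> car p \<and> (\<lambda>k. - x k) \<oplus>\<^bsub>DP2 p\<^esub> x = \<zero>\<^bsub>DP2 p\<^esub>"
      by (auto simp: neg_closed DP2_add DP2_zero)
    thus "\<exists>y\<in>car p. y \<oplus>\<^bsub>DP2 p\<^esub> x = \<zero>\<^bsub>DP2 p\<^esub>" by blast
  qed (auto simp: add_closed[unfolded DP2_add] zero_closed[unfolded DP2_zero] DP2_add DP2_zero add.assoc add.commute)
  show "comm_monoid (DP2 p)"
  proof (rule comm_monoidI)
    fix x y z
    show "x \<otimes>\<^bsub>DP2 p\<^esub> y \<otimes>\<^bsub>DP2 p\<^esub> z = x \<otimes>\<^bsub>DP2 p\<^esub> (y \<otimes>\<^bsub>DP2 p\<^esub> z)"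
      by (rule Phi_inj) (simp add: Phi_mult mult.assoc)
    show "\<one>\<^bsub>DP2 p\<^esub> \<otimes>\<^bsub>DP2 p\<^esub> x = x"
      by (rule Phi_inj) (simp add: Phi_mult Phi_one)
    show "x \<otimes>\<^bsub>DP2 p\<^esub> y = y \<otimes>\<^bsub>DP2 p\<^esub> x"
      by (rule Phi_inj) (simp add: Phi_mult mult.commute)
  qed (auto simp: mult_closed one_closed)
  fix x y z
  show "(x \<oplus>\<^bsub>DP2 p\<^esub> y) \<otimes>\<^bsub>DP2 p\<^esub> z = x \<otimes>\<^bsub>DP2 p\<^esub> z \<oplus>\<^bsub>DP2 p\<^esub> y \<otimes>\<^bsub>DP2 p\<^esub> z"
    by (rule Phi_inj) (simp add: Phi_mult Phi_add distrib_right)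
qed

lemma (in cring) lincomb_ideal:
  assumes g: "g \<in> {..<n} \<rightarrow> carrier R"
  shows "ideal {lin_comb R n a g | a. a \<in> {..<n} \<rightarrow> carrier R} R"
    (is "ideal ?L R")
proof -
  have LC: "lin_comb R n a g \<in> carrier R" if "a \<in> {..<n} \<rightarrow> carrier R" for a
    unfolding lin_comb_def using that g by (intro finsum_closed) auto
  have add: "lin_comb R n a g \<oplus> lin_comb R n b g = lin_comb R n (\<lambda>i. a i \<oplus> b i) g"
    if "a \<in> {..<n} \<rightarrow> carrier R" "b \<in> {..<n} \<rightarrow> carrier R" for a b
  proof -
    have ab: "a i \<in> carrier R" "b i \<in> carrier R" "g i \<in> carrier R" if "i \<in> {..<n}" for i
      using \<open>a \<in> {..<n} \<rightarrow> carrier R\<close> \<open>b \<in> {..<n} \<rightarrow> carrier R\<close> g that by auto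
    have "(\<Oplus>i\<in>{..<n}. (a i \<oplus> b i) \<otimes> g i) = (\<Oplus>i\<in>{..<n}. a i \<otimes> g i \<oplus> b i \<otimes> g i)"
      by (intro finsum_cong') (auto simp: ab l_distr)
    also have "\<dots> = (\<Oplus>i\<in>{..<n}. a i \<otimes> g i) \<oplus> (\<Oplus>i\<in>{..<n}. b i \<otimes> g i)"
      by (intro finsum_addf) (auto simp: ab)
    finally show ?thesis unfolding lin_comb_def by simp
  qed
  have smul: "x \<otimes> lin_comb R n a g = lin_comb R n (\<lambda>i. x \<otimes> a i) g"
    if "a \<in> {..<n} \<rightarrow> carrier R" "x \<in> carrier R" for a x
    unfolding lin_comb_def using that g
    by (subst finsum_rdistr) (auto intro!: finsum_cong' simp: Pi_iff m_assoc)
  show ?thesis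
  proof (rule idealI)
    show "ring R" by (rule ring_axioms)
    have neg: "\<ominus> h \<in> ?L" if "h \<in> ?L" for h
    proof -
      from that obtain a where a: "a \<in> {..<n} \<rightarrow> carrier R" "h = lin_comb R n a g" by blast
      have na: "(\<lambda>i. \<ominus> a i) \<in> {..<n} \<rightarrow> carrier R" using a by auto
      have "lin_comb R n (\<lambda>i. \<ominus> a i) g \<oplus> h = lin_comb R n (\<lambda>i. \<ominus> a i \<oplus> a i) g"
        using a add[of "\<lambda>i. \<ominus> a i" a] by auto
      also have "\<dots> = (\<Oplus>i\<in>{..<n}. \<zero>)" unfolding lin_comb_def using g a
        by (intro finsum_cong') (auto simp: Pi_iff l_neg)
      also have "\<dots> = \<zero>" by simp
      finally have "lin_comb R n (\<lambda>i. \<ominus> a i) g = \<ominus> h" using a LC na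
        by (metis (no_types, lifting) minus_equality)
      thus ?thesis using na by (metis (mono_tags, lifting) mem_Collect_eq)
    qed
    have addc: "h \<oplus> k \<in> ?L" if "h \<in> ?L" "k \<in> ?L" for h k
    proof -
      from that obtain a b where "a \<in> {..<n} \<rightarrow> carrier R" "h = lin_comb R n a g"
        "b \<in> {..<n} \<rightarrow> carrier R" "k = lin_comb R n b g" by blast
      thus ?thesis using add by (auto intro!: exI[of _ "\<lambda>i. a i \<oplus> b i"])
    qed
    have ne: "?L \<noteq> {}"
    proof -
      have "(\<lambda>i. \<zero>) \<in> {..<n} \<rightarrow> carrier R" by auto
      thus ?thesis by blast
    qed
    show "subgroup ?L (add_monoid R)"
      by (rule add.subgroupI) (use LC ne neg addc in \<open>auto simp: a_inv_def\<close>)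
  next
    fix h x assume "h \<in> ?L" "x \<in> carrier R"
    then obtain a where a: "a \<in> {..<n} \<rightarrow> carrier R" "h = lin_comb R n a g" by blast
    show "x \<otimes> h \<in> ?L" using a smul \<open>x \<in> carrier R\<close> by (auto intro!: exI[of _ "\<lambda>i. x \<otimes> a i"])
    show "h \<otimes> x \<in> ?L" using a smul \<open>x \<in> carrier R\<close> LC m_comm by (auto intro!: exI[of _ "\<lambda>i. x \<otimes> a i"])
  qed
qed

lemma (in cring) genideal_lincomb:
  assumes g: "g \<in> {..<n} \<rightarrow> carrier R" and h: "h \<in> genideal R (g ` {..<n})"
  shows "\<exists>a. a \<in> {..<n} \<rightarrow> carrier R \<and> h = lin_comb R n a g"
proof -
  have sub: "g ` {..<n} \<subseteq> {lin_comb R n a g | a. a \<in> {..<n} \<rightarrow> carrier R}"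
  proof
    fix y assume "y \<in> g ` {..<n}"
    then obtain j where j: "j < n" "y = g j" by auto
    let ?a = "\<lambda>i. if i = j then \<one> else \<zero>"
    have "lin_comb R n ?a g = (\<Oplus>i\<in>{..<n}. if j = i then g i else \<zero>)"
      unfolding lin_comb_def using g j by (intro finsum_cong') (auto simp: Pi_iff)
    also have "\<dots> = g j" using j g by (intro add.finprod_singleton) auto
    finally have e: "y = lin_comb R n ?a g" using j by simp
    have "?a \<in> {..<n} \<rightarrow> carrier R" by auto
    thus "y \<in> {lin_comb R n a g | a. a \<in> {..<n} \<rightarrow> carrier R}" using e by blast
  qed
  show ?thesis using genideal_minimal[OF lincomb_ideal[OF g] sub] h by blast
qed

interpretation DP: cring "DP2 p" for p by (rule cring_DP2)

lemma dsum_delta: fixes n m :: nat shows "(\<Sum>i\<le>n. \<Sum>j\<le>m. if i = A \<and> j = B then h i j else (0::'a::comm_monoid_add)) = (if A \<le> n \<and> B \<le> m then h A B else 0)"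
proof -
  have "(\<Sum>i\<le>n. \<Sum>j\<le>m. if i = A \<and> j = B then h i j else (0::'a)) = (\<Sum>i\<le>n. if i = A then (if B \<le> m then h A B else 0) else 0)"
    by (intro sum.cong refl, case_tac "x = A") simp_all
  also have "\<dots> = (if A \<le> n \<and> B \<le> m then h A B else 0)" by (auto simp: sum.delta')
  finally show ?thesis .
qed

lemma dpmon_closed: "dpmon i j \<in> car p"
proof -
  have "{k. dpmon i j k \<noteq> 0} = {(i,j)}" by (auto simp: dpmon_def)
  thus ?thesis by (auto simp: DP2_carrier dpmon_def Zloc_0 Zloc_1)
qed

lemma dpmon_mult: "(dpmon A B \<otimes>\<^bsub>DP2 p\<^esub> f) (n, m) =
   (if A \<le> n \<and> B \<le> m then of_nat (n choose A) * of_nat (m choose B) * f (n - A, m - B) else 0)"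
proof -
  have "(dpmon A B \<otimes>\<^bsub>DP2 p\<^esub> f) (n, m) = (\<Sum>i\<le>n. \<Sum>j\<le>m. if i = A \<and> j = B then
     of_nat (n choose i) * of_nat (m choose j) * f (n - i, m - j) else 0)"
    unfolding DP2_mult by (intro sum.cong refl) (auto simp: dpmon_def)
  thus ?thesis by (simp only: dsum_delta[where h="\<lambda>i j. of_nat (n choose i) * of_nat (m choose j) * f (n - i, m - j)"])
qed

lemma mult_dpmon: "f \<in> car p \<Longrightarrow> (f \<otimes>\<^bsub>DP2 p\<^esub> dpmon A B) (n, m) =
   (if A \<le> n \<and> B \<le> m then of_nat (n choose A) * of_nat (m choose B) * f (n - A, m - B) else 0)"
  using cring.cring_simprules(14)[OF cring_DP2, of f p "dpmon A B"] dpmon_closed dpmon_mult by metis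

lemma finsum_apply: "finite A \<Longrightarrow> F \<in> A \<rightarrow> car p \<Longrightarrow> finsum (DP2 p) F A k = (\<Sum>a\<in>A. F a k)"
proof (induction A rule: finite_induct)
  case empty
  then show ?case using DP.finsum_empty by (simp add: DP2_zero)
next
  case (insert x A)
  have "finsum (DP2 p) F (insert x A) = F x \<oplus>\<^bsub>DP2 p\<^esub> finsum (DP2 p) F A"
    using insert DP.finsum_insert by auto
  then show ?case using insert by (simp add: DP2_add)
qed

lemma Phi_finsum: "finite A \<Longrightarrow> F \<in> A \<rightarrow> car p \<Longrightarrow> Phi (finsum (DP2 p) F A) = (\<Sum>a\<in>A. Phi (F a))"
proof (induction A rule: finite_induct)
  case empty
  then show ?case using DP.finsum_empty by (simp add: Phi_zero)
next
  case (insert x A)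
  have "finsum (DP2 p) F (insert x A) = F x \<oplus>\<^bsub>DP2 p\<^esub> finsum (DP2 p) F A"
    using insert DP.finsum_insert by auto
  then show ?case using insert by (simp add: Phi_add)
qed

lemma a_inv_DP2: "f \<in> car p \<Longrightarrow> \<ominus>\<^bsub>DP2 p\<^esub> f = (\<lambda>k. - f k)"
proof -
  assume f: "f \<in> car p"
  interpret cring "DP2 p" by (rule cring_DP2)
  have "(\<lambda>k. - f k) \<oplus>\<^bsub>DP2 p\<^esub> f = \<zero>\<^bsub>DP2 p\<^esub>" by (simp add: DP2_add DP2_zero)
  thus ?thesis using f neg_closed[OF f] DP.minus_equality by blast
qed

lemma Phi_lin_comb: "a \<in> {..<n} \<rightarrow> car p \<Longrightarrow> g \<in> {..<n} \<rightarrow> car p \<Longrightarrow>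
   Phi (lin_comb (DP2 p) n a g) = (\<Sum>i<n. Phi (a i) * Phi (g i))"
  unfolding lin_comb_def by (subst Phi_finsum) (auto simp: Phi_mult intro!: mult_closed)

lemma lin_comb_closed: "a \<in> {..<n} \<rightarrow> car p \<Longrightarrow> g \<in> {..<n} \<rightarrow> car p \<Longrightarrow>
   lin_comb (DP2 p) n a g \<in> car p"
  unfolding lin_comb_def by (intro DP.finsum_closed) (auto intro!: mult_closed)

abbreviation "xx \<equiv> dpmon 1 0"
abbreviation "yy \<equiv> dpmon 0 1"
abbreviation "II p \<equiv> genideal (DP2 p) {yy, xx}"

lemma xmult: "(xx \<otimes>\<^bsub>DP2 p\<^esub> u) (a, b) = (if 1 \<le> a then of_nat a * u (a - 1, b) else 0)"
  by (simp add: dpmon_mult)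

lemma ymult: "(yy \<otimes>\<^bsub>DP2 p\<^esub> v) (a, b) = (if 1 \<le> b then of_nat b * v (a, b - 1) else 0)"
  by (simp add: dpmon_mult)

lemma restrict_closed: "u \<in> car p \<Longrightarrow> (\<lambda>k. if P k then u k else 0) \<in> car p"
proof -
  assume u: "u \<in> car p"
  have "{k. (if P k then u k else 0) \<noteq> 0} \<subseteq> {k. u k \<noteq> 0}" by auto
  thus ?thesis using u by (auto simp: DP2_carrier Zloc_0 intro: finite_subset)
qed

lemma II_char: "II p = {xx \<otimes>\<^bsub>DP2 p\<^esub> u \<oplus>\<^bsub>DP2 p\<^esub> yy \<otimes>\<^bsub>DP2 p\<^esub> v | u v. u \<in> car p \<and> v \<in> car p}"
proof
  let ?g = "\<lambda>i::nat. if i = 0 then yy else xx"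
  have g: "?g \<in> {..<2} \<rightarrow> car p" using dpmon_closed by auto
  have gi: "?g ` {..<2} = {yy, xx}" by (auto simp: numeral_2_eq_2 lessThan_Suc)
  show "II p \<subseteq> {xx \<otimes>\<^bsub>DP2 p\<^esub> u \<oplus>\<^bsub>DP2 p\<^esub> yy \<otimes>\<^bsub>DP2 p\<^esub> v | u v. u \<in> car p \<and> v \<in> car p}"
  proof
    fix h assume "h \<in> II p"
    then obtain a where a: "a \<in> {..<2} \<rightarrow> car p" "h = lin_comb (DP2 p) 2 a ?g"
      using DP.genideal_lincomb[OF g] gi by metis
    have a01: "a 0 \<in> car p" "a 1 \<in> car p" using a by auto
    have "Phi h = Phi (a 0) * Phi yy + Phi (a 1) * Phi xx"
      using a g by (simp add: Phi_lin_comb numeral_2_eq_2 lessThan_Suc)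
    also have "\<dots> = Phi (xx \<otimes>\<^bsub>DP2 p\<^esub> a 1 \<oplus>\<^bsub>DP2 p\<^esub> yy \<otimes>\<^bsub>DP2 p\<^esub> a 0)"
      by (simp add: Phi_add Phi_mult algebra_simps)
    finally have "h = xx \<otimes>\<^bsub>DP2 p\<^esub> a 1 \<oplus>\<^bsub>DP2 p\<^esub> yy \<otimes>\<^bsub>DP2 p\<^esub> a 0" by (rule Phi_inj)
    thus "h \<in> {xx \<otimes>\<^bsub>DP2 p\<^esub> u \<oplus>\<^bsub>DP2 p\<^esub> yy \<otimes>\<^bsub>DP2 p\<^esub> v | u v. u \<in> car p \<and> v \<in> car p}"
      using a01 by blast
  qed
next
  show "{xx \<otimes>\<^bsub>DP2 p\<^esub> u \<oplus>\<^bsub>DP2 p\<^esub> yy \<otimes>\<^bsub>DP2 p\<^esub> v | u v. u \<in> car p \<and> v \<in> car p} \<subseteq> II p"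
  proof safe
    fix u v assume uv: "u \<in> car p" "v \<in> car p"
    have id: "ideal (II p) (DP2 p)" by (rule DP.genideal_ideal) (auto simp: dpmon_closed)
    have "xx \<in> II p" "yy \<in> II p" using DP.genideal_self[of "{yy,xx}" p] by (auto simp: dpmon_closed)
    hence "xx \<otimes>\<^bsub>DP2 p\<^esub> u \<in> II p" "yy \<otimes>\<^bsub>DP2 p\<^esub> v \<in> II p"
      using uv ideal.I_r_closed[OF id] by auto
    thus "xx \<otimes>\<^bsub>DP2 p\<^esub> u \<oplus>\<^bsub>DP2 p\<^esub> yy \<otimes>\<^bsub>DP2 p\<^esub> v \<in> II p"
      using id by (meson additive_subgroup.a_closed ideal.axioms(1))
  qed
qed

lemma II_ideal: "ideal (II p) (DP2 p)" by (rule DP.genideal_ideal) (auto simp: dpmon_closed)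

lemma II_fg: "finitely_generated_ideal (DP2 p) (II p)"
  unfolding finitely_generated_ideal_def by (rule exI[of _ "{yy,xx}"]) (auto simp: dpmon_closed)

lemma II_xhom: "x_homogeneous (II p)"
  unfolding x_homogeneous_def
proof (intro ballI allI)
  fix f d assume "f \<in> II p"
  then obtain u v where uv: "u \<in> car p" "v \<in> car p" "f = xx \<otimes>\<^bsub>DP2 p\<^esub> u \<oplus>\<^bsub>DP2 p\<^esub> yy \<otimes>\<^bsub>DP2 p\<^esub> v"
    unfolding II_char by blast
  let ?u = "\<lambda>k. if fst k + 1 = d then u k else 0"
  let ?v = "\<lambda>k. if fst k = d then v k else 0"
  have "(\<lambda>(i, j). if i = d then f (i, j) else 0) = xx \<otimes>\<^bsub>DP2 p\<^esub> ?u \<oplus>\<^bsub>DP2 p\<^esub> yy \<otimes>\<^bsub>DP2 p\<^esub> ?v"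
  proof (rule ext, clarify)
    fix a b
    show "(if a = d then f (a, b) else 0) = (xx \<otimes>\<^bsub>DP2 p\<^esub> ?u \<oplus>\<^bsub>DP2 p\<^esub> yy \<otimes>\<^bsub>DP2 p\<^esub> ?v) (a, b)"
      unfolding uv(3) DP2_add xmult ymult by auto
  qed
  moreover have "?u \<in> car p" "?v \<in> car p" using uv restrict_closed by auto
  ultimately show "(\<lambda>(i, j). if i = d then f (i, j) else 0) \<in> II p" unfolding II_char by blast
qed

lemma II_bihom: "bi_homogeneous (II p)"
  unfolding bi_homogeneous_def
proof (intro ballI allI)
  fix f d e assume "f \<in> II p"
  then obtain u v where uv: "u \<in> car p" "v \<in> car p" "f = xx \<otimes>\<^bsub>DP2 p\<^esub> u \<oplus>\<^bsub>DP2 p\<^esub> yy \<otimes>\<^bsub>DP2 p\<^esub> v"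
    unfolding II_char by blast
  let ?u = "\<lambda>k. if fst k + 1 = d \<and> snd k = e then u k else 0"
  let ?v = "\<lambda>k. if fst k = d \<and> snd k + 1 = e then v k else 0"
  have "(\<lambda>k. if k = (d, e) then f k else 0) = xx \<otimes>\<^bsub>DP2 p\<^esub> ?u \<oplus>\<^bsub>DP2 p\<^esub> yy \<otimes>\<^bsub>DP2 p\<^esub> ?v"
  proof (rule ext, clarify)
    fix a b
    show "(if (a, b) = (d, e) then f (a, b) else 0) = (xx \<otimes>\<^bsub>DP2 p\<^esub> ?u \<oplus>\<^bsub>DP2 p\<^esub> yy \<otimes>\<^bsub>DP2 p\<^esub> ?v) (a, b)"
      unfolding uv(3) DP2_add xmult ymult by auto
  qed
  moreover have "?u \<in> car p" "?v \<in> car p" using uv restrict_closed by auto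
  ultimately show "(\<lambda>k. if k = (d, e) then f k else 0) \<in> II p" unfolding II_char by blast
qed

lemma pdvd:
  assumes "of_nat M / of_nat Q \<in> Zloc p" "Q = p ^ K" "p > 0"
  shows "Q dvd M"
proof -
  obtain a b where ab: "b > 0" "coprime (int p) b" "of_nat M / of_nat Q = (of_int a / of_int b :: rat)"
    using assms(1) unfolding Zloc_iff by blast
  have Q0: "Q \<noteq> 0" using assms(2,3) by simp
  have "rat_of_int (int M * b) = rat_of_int (a * int Q)"
    using ab Q0 by (simp add: field_simps)
  hence e: "int M * b = a * int Q" by (simp only: of_int_eq_iff)
  have "int Q dvd int M * b" using e by simp
  moreover have "coprime (int Q) b" using ab(2) assms(2) by simp
  ultimately have "int Q dvd int M" by (metis coprime_dvd_mult_left_iff)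
  thus ?thesis by simp
qed

lemma key:
  assumes c: "c \<in> car p" and w: "w \<in> car p" and z: "z \<in> car p"
  and rel: "xx \<otimes>\<^bsub>DP2 p\<^esub> w \<oplus>\<^bsub>DP2 p\<^esub> yy \<otimes>\<^bsub>DP2 p\<^esub> z = \<zero>\<^bsub>DP2 p\<^esub>"
  and bd: "\<forall>a b. w (a, b) \<noteq> 0 \<longrightarrow> a < N \<and> b < N" and NP: "N < P"
  shows "of_nat (fact N) * (c \<otimes>\<^bsub>DP2 p\<^esub> w) (P - 1, P) / of_nat P \<in> Zloc p"
proof -
  have cz: "c k \<in> Zloc p" "z k \<in> Zloc p" for k using c z unfolding DP2_carrier by blast+
  have T: "of_nat (fact N) * of_nat (P choose j) * w (P - 1 - i, P - j) / of_nat P \<in> Zloc p"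
    if ij: "j \<le> P" for i j
  proof (cases "w (P - 1 - i, P - j) = 0")
    case True then show ?thesis by (simp add: Zloc_0)
  next
    case False
    define a where "a = P - 1 - i"
    define b where "b = P - j"
    have wab: "w (a, b) \<noteq> 0" using False a_def b_def by simp
    have aN: "a < N" "b < N" using bd wab by auto
    have "(xx \<otimes>\<^bsub>DP2 p\<^esub> w \<oplus>\<^bsub>DP2 p\<^esub> yy \<otimes>\<^bsub>DP2 p\<^esub> z) (a + 1, b) = 0"
      using rel by (simp add: DP2_zero)
    hence r: "of_nat (a + 1) * w (a, b) + (if 1 \<le> b then of_nat b * z (a + 1, b - 1) else 0) = 0"
      unfolding DP2_add xmult ymult by simp
    have b1: "1 \<le> b"
    proof (rule ccontr)
      assume "\<not> 1 \<le> b" then have "of_nat (a + 1) * w (a, b) = 0" using r by simp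
      then show False using wab by simp
    qed
    then obtain b' where b': "b = Suc b'" by (cases b) auto
    have bP: "b \<le> P" using b_def by simp
    then obtain P' where P': "P = Suc P'" using b' by (cases P) auto
    have j: "j = P - b" using b_def ij by simp
    have ch: "P choose j = P choose b" using j binomial_symmetric[OF bP] by simp
    have st: "b * (P choose b) = P * (P' choose b')" using Suc_times_binomial[of b' P'] b' P' by simp
    obtain q where q: "fact N = (a + 1) * q" using dvd_fact[of "a + 1" N] aN by (auto elim: dvdE)
    have rel2: "of_nat (a + 1) * w (a, b) = - (of_nat b * z (a + 1, b - 1))" using r b1 by (simp add: eq_neg_iff_add_eq_0)
    have e1: "of_nat (fact N) = (of_nat (a + 1) * of_nat q :: rat)" using q by (metis of_nat_mult)
    have "of_nat (fact N) * of_nat (P choose j) * w (P - 1 - i, P - j) / of_nat P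
        = of_nat (fact N) * of_nat (P choose b) * w (a, b) / (of_nat P :: rat)"
      unfolding a_def[symmetric] b_def[symmetric] ch ..
    also have "\<dots> = of_nat q * of_nat (P choose b) * (of_nat (a + 1) * w (a, b)) / (of_nat P :: rat)"
      unfolding e1 by (simp add: algebra_simps)
    also have "\<dots> = of_nat q * of_nat (P choose b) * (- (of_nat b * z (a + 1, b - 1))) / (of_nat P :: rat)"
      by (simp only: rel2)
    also have "\<dots> = - (of_nat q * (of_nat (b * (P choose b))) * z (a + 1, b - 1) / of_nat P)"
      by (simp add: algebra_simps)
    also have "\<dots> = - (of_nat q * of_nat (P' choose b') * z (a + 1, b - 1))"
      unfolding st using P' by (simp add: field_simps)
    also have "\<dots> \<in> Zloc p" by (intro Zloc_uminus Zloc_mult Zloc_nat cz)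
    finally show ?thesis .
  qed
  have "of_nat (fact N) * (c \<otimes>\<^bsub>DP2 p\<^esub> w) (P - 1, P) / of_nat P =
     (\<Sum>i\<le>P - 1. \<Sum>j\<le>P. of_nat (P - 1 choose i) * c (i, j) *
        (of_nat (fact N) * of_nat (P choose j) * w (P - 1 - i, P - j) / of_nat P))"
    unfolding DP2_mult by (simp add: sum_distrib_left sum_divide_distrib algebra_simps)
  also have "\<dots> \<in> Zloc p"
    by (intro Zloc_sum Zloc_mult Zloc_nat cz T) auto
  finally show ?thesis .
qed

lemma Phi_lc: "a \<in> {..<n} \<rightarrow> car p \<Longrightarrow> g \<in> {..<n} \<rightarrow> car p \<Longrightarrow>
   Phi (lin_comb (DP2 p) n a g) = (\<Sum>i<n. Phi (a i) * Phi (g i))"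
  by (rule Phi_lin_comb)

lemma not_fp:
  assumes pp: "prime p"
  shows "\<not> finitely_presented_ideal (DP2 p) (II p)"
proof
  assume "finitely_presented_ideal (DP2 p) (II p)"
  then obtain n g and m :: nat and s where g: "g \<in> {..<n} \<rightarrow> car p" and Ieq: "II p = genideal (DP2 p) (g ` {..<n})"
    and syz: "\<forall>k<m. s k \<in> syzygies (DP2 p) n g"
    and gen: "\<forall>r\<in>syzygies (DP2 p) n g. \<exists>c. c \<in> {..<m} \<rightarrow> car p \<and>
               (\<forall>i<n. r i = finsum (DP2 p) (\<lambda>k. c k \<otimes>\<^bsub>DP2 p\<^esub> s k i) {..<m})"
    unfolding finitely_presented_ideal_def by blast
  have p0: "p > 1" using pp prime_gt_1_nat by blast
  have "\<forall>i. \<exists>uv. i < n \<longrightarrow> fst uv \<in> car p \<and> snd uv \<in> car p \<and>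
      g i = xx \<otimes>\<^bsub>DP2 p\<^esub> fst uv \<oplus>\<^bsub>DP2 p\<^esub> yy \<otimes>\<^bsub>DP2 p\<^esub> snd uv"
  proof (intro allI)
    fix i
    show "\<exists>uv. i < n \<longrightarrow> fst uv \<in> car p \<and> snd uv \<in> car p \<and>
      g i = xx \<otimes>\<^bsub>DP2 p\<^esub> fst uv \<oplus>\<^bsub>DP2 p\<^esub> yy \<otimes>\<^bsub>DP2 p\<^esub> snd uv"
    proof (cases "i < n")
      case True
      have "g i \<in> II p" unfolding Ieq using True g DP.genideal_self[of "g ` {..<n}" p] by auto
      then show ?thesis unfolding II_char by force
    qed simp
  qed
  then obtain UV where UV: "\<And>i. i < n \<Longrightarrow> fst (UV i) \<in> car p \<and> snd (UV i) \<in> car p \<and>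
      g i = xx \<otimes>\<^bsub>DP2 p\<^esub> fst (UV i) \<oplus>\<^bsub>DP2 p\<^esub> yy \<otimes>\<^bsub>DP2 p\<^esub> snd (UV i)"
    by metis
  define u where "u i = fst (UV i)" for i
  define v where "v i = snd (UV i)" for i
  have u: "u \<in> {..<n} \<rightarrow> car p" and v: "v \<in> {..<n} \<rightarrow> car p" using UV by (auto simp: u_def v_def)
  have Phig: "Phi (g i) = Phi xx * Phi (u i) + Phi yy * Phi (v i)" if "i < n" for i
    using UV[OF that] by (simp add: u_def v_def Phi_add Phi_mult)
  have "xx \<in> genideal (DP2 p) (g ` {..<n})" "yy \<in> genideal (DP2 p) (g ` {..<n})"
    unfolding Ieq[symmetric] using DP.genideal_self[of "{yy,xx}" p] by (auto simp: dpmon_closed)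
  then obtain b where b: "b \<in> {..<n} \<rightarrow> car p" "xx = lin_comb (DP2 p) n b g"
    and a: "\<exists>a. a \<in> {..<n} \<rightarrow> car p \<and> yy = lin_comb (DP2 p) n a g"
    using DP.genideal_lincomb[OF g] by metis
  then obtain a where a: "a \<in> {..<n} \<rightarrow> car p" "yy = lin_comb (DP2 p) n a g" by blast
  define w where "w k = lin_comb (DP2 p) n (s k) u" for k
  define z where "z k = lin_comb (DP2 p) n (s k) v" for k
  have sk: "s k \<in> {..<n} \<rightarrow> car p" "lin_comb (DP2 p) n (s k) g = \<zero>\<^bsub>DP2 p\<^esub>" if "k < m" for k
    using syz that unfolding syzygies_def by auto
  have wz: "w k \<in> car p" "z k \<in> car p" if "k < m" for k
    using sk[OF that] u v by (auto simp: w_def z_def intro: lin_comb_closed)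
  have rel: "xx \<otimes>\<^bsub>DP2 p\<^esub> w k \<oplus>\<^bsub>DP2 p\<^esub> yy \<otimes>\<^bsub>DP2 p\<^esub> z k = \<zero>\<^bsub>DP2 p\<^esub>" if "k < m" for k
  proof (rule Phi_inj)
    have "Phi (xx \<otimes>\<^bsub>DP2 p\<^esub> w k \<oplus>\<^bsub>DP2 p\<^esub> yy \<otimes>\<^bsub>DP2 p\<^esub> z k)
        = (\<Sum>i<n. Phi (s k i) * (Phi xx * Phi (u i) + Phi yy * Phi (v i)))"
      using sk[OF that] u v
      by (simp add: Phi_add Phi_mult w_def z_def Phi_lin_comb sum_distrib_left sum.distrib algebra_simps)
    also have "\<dots> = (\<Sum>i<n. Phi (s k i) * Phi (g i))" by (intro sum.cong refl) (simp add: Phig)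
    also have "\<dots> = Phi (lin_comb (DP2 p) n (s k) g)" using sk(1)[OF that] g by (rule Phi_lin_comb[symmetric])
    finally show "Phi (xx \<otimes>\<^bsub>DP2 p\<^esub> w k \<oplus>\<^bsub>DP2 p\<^esub> yy \<otimes>\<^bsub>DP2 p\<^esub> z k) = Phi \<zero>\<^bsub>DP2 p\<^esub>"
      using sk[OF that] by simp
  qed
  have "\<forall>k. \<exists>Nk. k < m \<longrightarrow> (\<forall>i j. w k (i, j) \<noteq> 0 \<longrightarrow> i < Nk \<and> j < Nk)"
    using wz fin_bound unfolding DP2_carrier by blast
  then obtain Nk where Nk: "\<And>k. k < m \<Longrightarrow> (\<forall>i j. w k (i, j) \<noteq> 0 \<longrightarrow> i < Nk k \<and> j < Nk k)" by metis
  define N where "N = (\<Sum>k<m. Nk k)"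
  have bd: "\<forall>i j. w k (i, j) \<noteq> 0 \<longrightarrow> i < N \<and> j < N" if "k < m" for k
  proof -
    have "Nk k \<le> N" unfolding N_def using that by (intro member_le_sum) auto
    thus ?thesis using Nk[OF that] by fastforce
  qed
  define P where "P = p ^ fact N"
  have "fact N < (2::nat) ^ fact N" by simp
  also have "\<dots> \<le> P" unfolding P_def using p0 by (intro power_mono) auto
  finally have NfP: "fact N < P" .
  have NP: "N < P" using NfP fact_ge_self[of N] by linarith
  have P1: "P \<ge> 1" using NP by simp
  define X where "X = dpmon P (P - 1)"
  define Y where "Y = dpmon (P - 1) P"
  define r where "r i = X \<otimes>\<^bsub>DP2 p\<^esub> a i \<oplus>\<^bsub>DP2 p\<^esub> (\<lambda>k. - (Y \<otimes>\<^bsub>DP2 p\<^esub> b i) k)" for i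
  have r: "r \<in> {..<n} \<rightarrow> car p" using a b
    by (auto simp: r_def X_def Y_def intro!: add_closed neg_closed mult_closed dpmon_closed)
  have Phir: "Phi (r i) = Phi X * Phi (a i) - Phi Y * Phi (b i)" for i
    by (simp add: r_def Phi_add Phi_neg Phi_mult)
  have XY: "X \<otimes>\<^bsub>DP2 p\<^esub> yy = Y \<otimes>\<^bsub>DP2 p\<^esub> xx"
  proof (rule ext, clarify)
    fix i j
    show "(X \<otimes>\<^bsub>DP2 p\<^esub> yy) (i, j) = (Y \<otimes>\<^bsub>DP2 p\<^esub> xx) (i, j)"
      unfolding X_def Y_def dpmon_mult using P1 by (auto simp: dpmon_def)
  qed
  have "r \<in> syzygies (DP2 p) n g"
  proof -
    have "Phi (lin_comb (DP2 p) n r g) = Phi X * (\<Sum>i<n. Phi (a i) * Phi (g i)) - Phi Y * (\<Sum>i<n. Phi (b i) * Phi (g i))"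
      using r g by (simp add: Phi_lin_comb Phir sum_distrib_left sum_subtractf algebra_simps)
    also have "\<dots> = Phi (X \<otimes>\<^bsub>DP2 p\<^esub> yy) - Phi (Y \<otimes>\<^bsub>DP2 p\<^esub> xx)"
      using a b g by (simp add: Phi_lin_comb[symmetric] Phi_mult)
    also have "\<dots> = Phi \<zero>\<^bsub>DP2 p\<^esub>" unfolding XY by (simp add: Phi_zero)
    finally have "lin_comb (DP2 p) n r g = \<zero>\<^bsub>DP2 p\<^esub>" by (rule Phi_inj)
    thus ?thesis using r unfolding syzygies_def by blast
  qed
  then obtain c where c: "c \<in> {..<m} \<rightarrow> car p"
    and rc: "\<And>i. i < n \<Longrightarrow> r i = finsum (DP2 p) (\<lambda>k. c k \<otimes>\<^bsub>DP2 p\<^esub> s k i) {..<m}"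
    using gen by blast
  define R where "R = lin_comb (DP2 p) n r u"
  have R1: "R = finsum (DP2 p) (\<lambda>k. c k \<otimes>\<^bsub>DP2 p\<^esub> w k) {..<m}"
  proof (rule Phi_inj)
    have Phirc: "Phi (r i) = (\<Sum>k<m. Phi (c k) * Phi (s k i))" if "i < n" for i
      unfolding rc[OF that] using c sk that by (subst Phi_finsum) (auto simp: Phi_mult intro!: mult_closed)
    have "Phi R = (\<Sum>i<n. (\<Sum>k<m. Phi (c k) * Phi (s k i)) * Phi (u i))"
      unfolding R_def using r u by (simp add: Phi_lin_comb Phirc)
    also have "\<dots> = (\<Sum>k<m. Phi (c k) * (\<Sum>i<n. Phi (s k i) * Phi (u i)))"
      unfolding sum_distrib_left sum_distrib_right mult.assoc by (rule sum.swap)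
    also have "\<dots> = (\<Sum>k<m. Phi (c k) * Phi (w k))"
      using sk u by (intro sum.cong refl) (simp add: w_def Phi_lin_comb)
    also have "\<dots> = Phi (finsum (DP2 p) (\<lambda>k. c k \<otimes>\<^bsub>DP2 p\<^esub> w k) {..<m})"
      using c wz by (subst Phi_finsum) (auto simp: Phi_mult intro!: mult_closed)
    finally show "Phi R = Phi (finsum (DP2 p) (\<lambda>k. c k \<otimes>\<^bsub>DP2 p\<^esub> w k) {..<m})" .
  qed
  have Rv1: "R (P - 1, P) = (\<Sum>k<m. (c k \<otimes>\<^bsub>DP2 p\<^esub> w k) (P - 1, P))"
    unfolding R1 using c wz by (subst finsum_apply) (auto intro!: mult_closed)
  define \<alpha> where "\<alpha> = lin_comb (DP2 p) n a u"
  define \<beta> where "\<beta> = lin_comb (DP2 p) n b u"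
  define \<beta>' where "\<beta>' = lin_comb (DP2 p) n b v"
  have R2: "R = X \<otimes>\<^bsub>DP2 p\<^esub> \<alpha> \<oplus>\<^bsub>DP2 p\<^esub> (\<lambda>k. - (Y \<otimes>\<^bsub>DP2 p\<^esub> \<beta>) k)"
    apply (rule Phi_inj)
    unfolding R_def \<alpha>_def \<beta>_def using r u a b
    by (simp add: Phi_lin_comb Phir Phi_add Phi_neg Phi_mult sum_distrib_left sum_subtractf algebra_simps)
  have xb: "xx = xx \<otimes>\<^bsub>DP2 p\<^esub> \<beta> \<oplus>\<^bsub>DP2 p\<^esub> yy \<otimes>\<^bsub>DP2 p\<^esub> \<beta>'"
  proof (rule Phi_inj)
    have "Phi xx = (\<Sum>i<n. Phi (b i) * (Phi xx * Phi (u i) + Phi yy * Phi (v i)))"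
      using b g by (simp add: Phi_lin_comb Phig)
    also have "\<dots> = Phi (xx \<otimes>\<^bsub>DP2 p\<^esub> \<beta> \<oplus>\<^bsub>DP2 p\<^esub> yy \<otimes>\<^bsub>DP2 p\<^esub> \<beta>')"
      unfolding \<beta>_def \<beta>'_def using b u v
      by (simp add: Phi_lin_comb Phi_add Phi_mult sum_distrib_left sum.distrib algebra_simps)
    finally show "Phi xx = Phi (xx \<otimes>\<^bsub>DP2 p\<^esub> \<beta> \<oplus>\<^bsub>DP2 p\<^esub> yy \<otimes>\<^bsub>DP2 p\<^esub> \<beta>')" .
  qed
  have b00: "\<beta> (0, 0) = 1"
  proof -
    have "xx (1, 0) = (xx \<otimes>\<^bsub>DP2 p\<^esub> \<beta> \<oplus>\<^bsub>DP2 p\<^esub> yy \<otimes>\<^bsub>DP2 p\<^esub> \<beta>') (1, 0)" using xb by simp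
    thus ?thesis unfolding DP2_add xmult ymult by (simp add: dpmon_def)
  qed
  have Rv2: "R (P - 1, P) = - 1"
    unfolding R2 DP2_add X_def Y_def dpmon_mult using P1 b00 by simp
  have "of_nat (fact N) * R (P - 1, P) / of_nat P = (\<Sum>k<m. of_nat (fact N) * (c k \<otimes>\<^bsub>DP2 p\<^esub> w k) (P - 1, P) / of_nat P)"
    unfolding Rv1 by (simp add: sum_distrib_left sum_divide_distrib)
  also have "\<dots> \<in> Zloc p"
  proof (intro Zloc_sum)
    fix k assume k: "k \<in> {..<m}"
    hence "c k \<in> car p" using c by auto
    thus "of_nat (fact N) * (c k \<otimes>\<^bsub>DP2 p\<^esub> w k) (P - 1, P) / of_nat P \<in> Zloc p"
      using k wz rel bd NP by (intro key[where z="z k"]) auto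
  qed
  finally have "- (of_nat (fact N) / of_nat P) \<in> Zloc p" using Rv2 by simp
  hence "of_nat (fact N) / of_nat P \<in> Zloc p" using Zloc_uminus by fastforce
  hence "P dvd fact N" using pdvd[of "fact N" P p "fact N"] P_def p0 by simp
  hence "P \<le> fact N" using dvd_imp_le fact_gt_zero by blast
  thus False using NfP by simp
qed

theorem mainTheorem4:
  fixes p :: nat
  assumes "prime p"
  shows "\<not> finitely_presented_ideal (DP2 p) (genideal (DP2 p) {dpmon 0 1, dpmon 1 0})
       \<and> \<not> graded_coherent (DP2 p) x_homogeneous
       \<and> \<not> coherent (DP2 p)
       \<and> \<not> graded_coherent (DP2 p) bi_homogeneous"
proof -
  have nfp: "\<not> finitely_presented_ideal (DP2 p) (II p)" by (rule not_fp[OF assms])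
  have "\<not> graded_coherent (DP2 p) x_homogeneous"
    unfolding graded_coherent_def using nfp II_ideal II_xhom II_fg by blast
  moreover have "\<not> graded_coherent (DP2 p) bi_homogeneous"
    unfolding graded_coherent_def using nfp II_ideal II_bihom II_fg by blast
  moreover have "\<not> coherent (DP2 p)"
    unfolding coherent_def using nfp II_ideal II_fg by blast
  ultimately show ?thesis using nfp by blast
qed

end
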